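(* Let $p$ be a prime, $r$ an integer, $j\in\{1,2,\dots,p-1\}$ and $t,N\in\mathbb{N}$, and let $\zeta_N$ be an $N$th root of unity. If $s$ is an integer such that $$\binom{s}{p^2-j}\equiv0\pmod p,$$ then for all $m,\lambda\in\mathbb{N}$, $$\xi_{p^2r,s,N,t}(p^\lambda m-j)\equiv0\pmod{p^{\lambda-1}}.$$
   Context: $(q)_n=\prod_{k=1}^n(1-q^k)$, $\binom{n}{k}_q=\frac{(q)_n}{(q)_{n-k}(q)_k}$ (zero unless $0\le k\le n$); $\binom{s}{k}=s(s-1)\cdots(s-k+1)/k!$ for any integer $s$. $\mathscr{F}_1(q)=\sum_{n\ge0}(q)_n$. For $t\ge2$ let $m(t)=2^{t-1}$; $h''(t)=(2^t-1)/3$, $h'(t)=(2^t-4)/3$, $a(t)=(2^{t-1}+1)/3$ if $t$ is even, and $h''(t)=(2^t-2)/3$, $h'(t)=(2^t-5)/3$, $a(t)=(2^t+1)/3$ if $t$ is odd, and $$\mathscr{F}_t(q)=(-1)^{h''(t)}q^{-h'(t)}\sum_{n\ge0}(q)_n\sum_{(j_1,\dots,j_{m(t)-1})}q^{\frac{-a(t)+\sum_{\ell}\ell j_\ell}{m(t)}+\sum_{\ell}\binom{j_\ell}{2}}\sum_{k=0}^{m(t)-1}\prod_{\ell=1}^{m(t)-1}\binom{n+I(\ell\le k)}{j_\ell}_q,$$ the middle sum over tuples of nonnegative integers with $3\sum_{\ell}\ell j_\ell\equiv1\pmod{m(t)}$, $I(\ell\le k)=1$ if $\ell\le k$ else $0$.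 For $R\in\mathbb{Z}$, $\mathscr{F}_t((\zeta_N-q)^R)$ is the formal power series in $q$ over $\mathbb{Z}[\zeta_N]$ obtained by substituting $(\zeta_N-q)^R$ for $q$ termwise, and $\xi_{R,s,N,t}(n)$ are defined by $(\zeta_N-q)^s\mathscr{F}_t((\zeta_N-q)^R)=\sum_{n\ge0}\xi_{R,s,N,t}(n)q^n$. $\rho\equiv0\pmod{p^\mu}$ in $\mathbb{Z}[\zeta_N]$ means $\rho\in p^\mu\mathbb{Z}[\zeta_N]$. *)

theory Defs
  imports Complex_Main "HOL-Computational_Algebra.Formal_Power_Series"
    "HOL-Computational_Algebra.Polynomial" "HOL-Analysis.Infinite_Sum"
begin

definition qpoch :: "nat \<Rightarrow> rat poly" where
  "qpoch n = (\<Prod>k\<in>{1..n}. 1 - monom 1 k)"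

text \<open>Gaussian binomial (q)_n / ((q)_{n-k} (q)_k), zero unless k <= n
  (the division is exact polynomial division).\<close>
definition gauss_binom :: "nat \<Rightarrow> nat \<Rightarrow> rat poly" where
  "gauss_binom n k = (if k \<le> n then qpoch n div (qpoch (n - k) * qpoch k) else 0)"

definition ibinom :: "int \<Rightarrow> nat \<Rightarrow> int" where
  "ibinom s k = (\<Prod>i<k. s - int i) div fact k"

text \<open>Integer powers of the invertible power series w = zeta - q (zeta nonzero).\<close>
definition wpow :: "complex \<Rightarrow> int \<Rightarrow> complex fps" where
  "wpow z e = (if e \<ge> 0 then (fps_const z - fps_X) ^ nat e
               else inverse (fps_const z - fps_X) ^ nat (- e))"

definition subst_poly :: "complex \<Rightarrow> int \<Rightarrow> rat poly \<Rightarrow> complex fps" where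
  "subst_poly z R P = poly (map_poly (\<lambda>c. fps_const (of_rat c)) P) (wpow z R)"

definition mt :: "nat \<Rightarrow> nat" where "mt t = 2 ^ (t - 1)"

definition hpp :: "nat \<Rightarrow> int" where
  "hpp t = (if even t then (2 ^ t - 1) div 3 else (2 ^ t - 2) div 3)"

definition hp :: "nat \<Rightarrow> int" where
  "hp t = (if even t then (2 ^ t - 4) div 3 else (2 ^ t - 5) div 3)"

definition aparam :: "nat \<Rightarrow> int" where
  "aparam t = (if even t then (2 ^ (t - 1) + 1) div 3 else (2 ^ t + 1) div 3)"

definition tuples :: "nat \<Rightarrow> (nat \<Rightarrow> nat) set" where
  "tuples t = {j. (\<forall>l. l \<notin> {1..mt t - 1} \<longrightarrow> j l = 0) \<and>
                  (3 * (\<Sum>l=1..mt t - 1. l * j l)) mod mt t = 1 mod mt t}"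

text \<open>The exponent (-a(t) + sum l j_l)/m(t) + sum binom(j_l,2) (an integer,
  the division being exact for admissible tuples).\<close>
definition qexp :: "nat \<Rightarrow> (nat \<Rightarrow> nat) \<Rightarrow> int" where
  "qexp t j = (- aparam t + int (\<Sum>l=1..mt t - 1. l * j l)) div int (mt t)
              + int (\<Sum>l=1..mt t - 1. j l choose 2)"

text \<open>The (n, j)-term of F_t after substituting q := (zeta - q)^R, for t >= 2.\<close>
definition Fterm :: "nat \<Rightarrow> complex \<Rightarrow> int \<Rightarrow> nat \<times> (nat \<Rightarrow> nat) \<Rightarrow> complex fps" where
  "Fterm t z R nj = (case nj of (n, j) \<Rightarrow>
     fps_const ((-1) ^ nat (hpp t)) * wpow z (R * (- hp t)) *
     subst_poly z R (qpoch n) * wpow z (R * qexp t j) *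
     (\<Sum>k<mt t. \<Prod>l=1..mt t - 1.
         subst_poly z R (gauss_binom (n + (if l \<le> k then 1 else 0)) (j l))))"

text \<open>F_t((zeta - q)^R) as a formal power series: termwise substitution,
  coefficients obtained by summing the coefficients of all terms
  (only finitely many terms contribute to each coefficient).\<close>
definition F_subst :: "nat \<Rightarrow> complex \<Rightarrow> int \<Rightarrow> complex fps" where
  "F_subst t z R =
     (if t = 1 then Abs_fps (\<lambda>i. infsum (\<lambda>n::nat. fps_nth (subst_poly z R (qpoch n)) i) UNIV)
      else Abs_fps (\<lambda>i. infsum (\<lambda>nj. fps_nth (Fterm t z R nj) i) (UNIV \<times> tuples t)))"

definition xi :: "int \<Rightarrow> int \<Rightarrow> complex \<Rightarrow> nat \<Rightarrow> nat \<Rightarrow> complex" where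
  "xi R s z t n = fps_nth (wpow z s * F_subst t z R) n"

definition Zzeta :: "nat \<Rightarrow> complex \<Rightarrow> complex set" where
  "Zzeta N z = {x. \<exists>c::nat \<Rightarrow> int. x = (\<Sum>k<N. of_int (c k) * z ^ k)}"

definition cong0 :: "nat \<Rightarrow> complex \<Rightarrow> complex \<Rightarrow> nat \<Rightarrow> nat \<Rightarrow> bool" where
  "cong0 N z x p mu = (\<exists>y \<in> Zzeta N z. x = of_nat (p ^ mu) * y)"

end

theory Submission
  imports Defs
begin

unbundle fps_syntax


lemma ibinom_props:
  "ibinom s k * fact k = (\<Prod>i<k. s - int i) \<and> real_of_int (ibinom s k) = of_int s gchoose k"
proof -
  obtain g where g: "g * fact k = (\<Prod>i=0..<k. s - int i)" "real_of_int g = of_int s gchoose k"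
    using gbinomial_int_mult_fact'[of s k] of_int_gbinomial[of s k] by blast
  have "ibinom s k = g" unfolding ibinom_def using g(1)
    by (metis atLeast0LessThan fact_nonzero nonzero_mult_div_cancel_right)
  then show ?thesis using g by (simp add: atLeast0LessThan)
qed

lemma ibinom_fact: "ibinom s k * fact k = (\<Prod>i<k. s - int i)"
  using ibinom_props by blast

lemma ibinom_real: "real_of_int (ibinom s k) = of_int s gchoose k"
  using ibinom_props by blast

lemma ibinom_nat: "ibinom (int M) k = int (M choose k)"
proof -
  have "real_of_int (ibinom (int M) k) = real_of_int (int (M choose k))"
    using ibinom_real[of "int M" k] binomial_gbinomial[where 'a=real, of M k] by simp
  then show ?thesis by linarith
qed

lemma ibinom_pascal: "ibinom (a+1) (Suc k) = ibinom a k + ibinom a (Suc k)"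
proof -
  have "real_of_int (ibinom (a+1) (Suc k)) = real_of_int (ibinom a k + ibinom a (Suc k))"
    using gbinomial_Suc_Suc[of "real_of_int a" k] by (simp add: ibinom_real)
  then show ?thesis by linarith
qed

lemma ibinom_0 [simp]: "ibinom a 0 = 1"
  using ibinom_real[of a 0] by simp

lemma not_sq_dvd_prod:
  fixes p :: int
  assumes "prime p" "finite I" "\<forall>i\<in>I. \<not> p^2 dvd f i"
    "\<forall>i\<in>I. \<forall>i'\<in>I. p dvd f i \<longrightarrow> p dvd f i' \<longrightarrow> i = i'"
  shows "\<not> p^2 dvd (\<Prod>i\<in>I. f i)"
proof (cases "\<exists>i0\<in>I. p dvd f i0")
  case False
  then have "\<not> p dvd (\<Prod>i\<in>I. f i)" using prime_dvd_prod_iff[OF assms(2,1)] by blast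
  then show ?thesis by (metis dvd_trans dvd_triv_left power2_eq_square)
next
  case True
  then obtain i0 where i0: "i0 \<in> I" "p dvd f i0" by blast
  have nr: "\<not> p dvd (\<Prod>i\<in>I-{i0}. f i)"
    using prime_dvd_prod_iff[of "I-{i0}" p f] assms i0 by auto
  have eq: "(\<Prod>i\<in>I. f i) = f i0 * (\<Prod>i\<in>I-{i0}. f i)"
    using prod.remove[OF assms(2) i0(1)] by simp
  have cop: "coprime (p^2) (\<Prod>i\<in>I-{i0}. f i)"
    using nr assms(1) by (simp add: prime_imp_coprime)
  show ?thesis
  proof
    assume "p^2 dvd (\<Prod>i\<in>I. f i)"
    then have "p^2 dvd f i0" using eq cop by (metis coprime_dvd_mult_left_iff)
    then show False using assms(3) i0 by blast
  qed
qed

lemma finish_dvd: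
  fixes p X Y :: int
  assumes "prime p" "p^lam dvd X * Y" "\<not> p^2 dvd Y" "lam \<ge> 1"
  shows "p^(lam-1) dvd X"
proof (cases "p dvd Y")
  case True
  then obtain Y' where Y': "Y = p * Y'" by blast
  have "\<not> p dvd Y'" using assms(3) Y' by (simp add: power2_eq_square)
  have "p^lam = p * p^(lam-1)" using assms(4)
    by (metis Suc_diff_le diff_Suc_1 power_Suc)
  then have "p * p^(lam-1) dvd p * (X * Y')" using assms(2) Y' by (simp add: ac_simps)
  then have "p^(lam-1) dvd X * Y'" using assms(1) by (simp add: prime_gt_0_int)
  moreover have "coprime (p^(lam-1)) Y'" using \<open>\<not> p dvd Y'\<close> assms(1)
    by (simp add: prime_imp_coprime)
  ultimately show ?thesis by (metis coprime_dvd_mult_left_iff)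
next
  case False
  then have "coprime (p^lam) Y" using assms(1) by (simp add: prime_imp_coprime)
  then have "p^lam dvd X" using assms(2) by (metis coprime_dvd_mult_left_iff)
  then show ?thesis by (meson diff_le_self dvd_trans le_imp_power_dvd)
qed

lemma nt2:
  fixes p :: nat and A :: int
  assumes p: "prime p" and j: "1 \<le> j" "j < p"
    and nd: "\<forall>k\<in>{1..j}. \<not> int p^2 dvd A + int k"
    and m: "m \<ge> 1" and lam: "lam \<ge> 1"
  shows "int p^(lam-1) dvd ibinom A (p^lam*m - j)"
proof (cases "lam = 1")
  case True then show ?thesis by simp
next
  case False
  then have lam2: "lam \<ge> 2" using lam by simp
  define n where "n = p^lam*m - j"
  define M where "M = p^lam*m"
  have pl: "p \<le> p^lam" using lam p by (metis One_nat_def power_increasing power_one_right prime_ge_1_nat)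
  have "p^lam \<le> p^lam*m" using m by simp
  then have jM: "j < M" using j pl unfolding M_def by linarith
  have nn: "n = M - j" unfolding n_def M_def by simp
  have nM: "n + j = M" "n \<le> M" "M - n = j" using jM nn by auto
  have pi: "prime (int p)" using p by simp
  have tri: "ibinom A M * ibinom (int M) n = ibinom A n * ibinom (A - int n) j"
  proof -
    have "(of_int A gchoose M) * (of_nat M gchoose n) = (of_int A gchoose n) * ((of_int A - of_nat n) gchoose (M - n) :: real)"
      using gbinomial_trinomial_revision[OF nM(2), of "of_int A :: real"] by simp
    then have "real_of_int (ibinom A M * ibinom (int M) n) = real_of_int (ibinom A n * ibinom (A - int n) j)"
      using nM by (simp add: ibinom_real)
    then show ?thesis by linarith
  qed
  have sym: "ibinom (int M) n = ibinom (int M) j"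
    using nM by (simp add: ibinom_nat binomial_symmetric[of n M])
  have eq: "ibinom A n * (\<Prod>i<j. A - int n - int i) = ibinom A M * (\<Prod>i<j. int M - int i)"
  proof -
    have "ibinom A n * (\<Prod>i<j. A - int n - int i) = ibinom A n * (ibinom (A - int n) j * fact j)"
      using ibinom_fact[of "A - int n" j] by simp
    also have "\<dots> = ibinom A M * (ibinom (int M) j * fact j)" using tri sym by (simp add: ac_simps)
    also have "\<dots> = ibinom A M * (\<Prod>i<j. int M - int i)" using ibinom_fact[of "int M" j] by simp
    finally show ?thesis .
  qed
  have "int p^lam dvd (\<Prod>i<j. int M - int i)"
  proof -
    have "int M - int 0 dvd (\<Prod>i<j. int M - int i)"
      by (rule dvd_prodI) (use j in auto)
    moreover have "int p^lam dvd int M - int 0" unfolding M_def by simp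
    ultimately show ?thesis by (meson dvd_trans)
  qed
  then have d1: "int p^lam dvd ibinom A n * (\<Prod>i<j. A - int n - int i)"
    using eq by (simp add: dvd_mult)
  have p2M: "int p^2 dvd int M" unfolding M_def using lam2
    by (metis dvd_mult2 le_imp_power_dvd of_nat_dvd_iff of_nat_power)
  have d2: "\<not> int p^2 dvd (\<Prod>i<j. A - int n - int i)"
  proof (rule not_sq_dvd_prod[OF pi])
    show "\<forall>i\<in>{..<j}. \<not> int p^2 dvd A - int n - int i"
    proof
      fix i assume i: "i \<in> {..<j}"
      have "A - int n - int i = (A + int (j - i)) - int M" using i nM by auto
      moreover have "\<not> int p^2 dvd A + int (j - i)" 
      proof -
        have "j - i \<in> {1..j}" using i by auto
        then show ?thesis using nd by blast
      qed
      ultimately show "\<not> int p^2 dvd A - int n - int i" using p2M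
        by (metis dvd_diff_commute dvd_add_left_iff diff_add_cancel)
    qed
    show "\<forall>i\<in>{..<j}. \<forall>i'\<in>{..<j}. int p dvd A - int n - int i \<longrightarrow> int p dvd A - int n - int i' \<longrightarrow> i = i'"
    proof (intro ballI impI)
      fix i i' assume ii: "i \<in> {..<j}" "i' \<in> {..<j}" "int p dvd A - int n - int i" "int p dvd A - int n - int i'"
      then have "int p dvd (A - int n - int i) - (A - int n - int i')" using dvd_diff by blast
      then have "int p dvd int i' - int i" by simp
      moreover have "\<bar>int i' - int i\<bar> < int p" using ii j by auto
      ultimately show "i = i'"
      proof (cases "int i' - int i = 0")
        case False
        then have "\<bar>int p\<bar> \<le> \<bar>int i' - int i\<bar>" using dvd_imp_le_int \<open>int p dvd int i' - int i\<close> by blast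
        then show ?thesis using \<open>\<bar>int i' - int i\<bar> < int p\<close> by simp
      qed simp
    qed
  qed simp
  show ?thesis using finish_dvd[OF pi d1 d2 lam] unfolding n_def by simp
qed

lemma nt_P1:
  fixes p :: nat and E :: int
  assumes p: "prime p" and i: "1 \<le> i" "i < p^2"
  shows "int p dvd ibinom (int p^2 * E) i"
proof -
  define a where "a = int p^2 * E"
  obtain k where k: "i = Suc k" using i by (cases i) auto
  have "real_of_int (int i * ibinom a i) = real_of_int (a * ibinom (a - 1) k)"
    using gbinomial_absorption[of k "real_of_int a"] k by (simp add: ibinom_real)
  then have eq: "int i * ibinom a i = a * ibinom (a - 1) k" by linarith
  have "int p^2 dvd a * ibinom (a - 1) k" by (simp add: a_def)
  then have d: "int p^2 dvd int i * ibinom a i" unfolding eq .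
  have pi: "prime (int p)" using p by simp
  have p0: "int p > 0" using p by (simp add: prime_gt_0_nat)
  show ?thesis
  proof (cases "int p dvd int i")
    case False
    then have "coprime (int p^2) (int i)" using pi by (simp add: prime_imp_coprime)
    then have "int p^2 dvd ibinom a i" using d by (simp add: coprime_dvd_mult_right_iff)
    then show ?thesis unfolding a_def power2_eq_square using dvd_mult_left by blast
  next
    case True
    then obtain i' where i': "int i = int p * i'" by blast
    have "0 < int p * i'" using i' i by simp
    then have "i' > 0" using p0 by (simp add: zero_less_mult_iff)
    have "i < p*p" using i by (simp add: power2_eq_square)
    then have "int i < int p * int p" by (simp flip: of_nat_mult)
    then have "int p * i' < int p * int p" using i' by simp
    then have "i' < int p" using p0 by simp
    then have nd: "\<not> int p dvd i'" using \<open>i' > 0\<close> by (simp add: zdvd_not_zless)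
    have "int p * int p dvd int p * (i' * ibinom a i)" using d i' by (simp add: power2_eq_square ac_simps)
    then have "int p dvd i' * ibinom a i" using p0 by simp
    then show ?thesis using nd pi unfolding a_def by (simp add: prime_dvd_mult_iff)
  qed
qed

lemma jp2: "prime (p::nat) \<Longrightarrow> j < p \<Longrightarrow> j < p^2"
proof -
  assume "prime p" "j < p"
  then have "p \<le> p * p" by (simp add: prime_gt_0_nat)
  then have "j < p * p" using \<open>j < p\<close> by linarith
  then show "j < p^2" by (simp add: power2_eq_square)
qed

lemma nt_P2:
  fixes p :: nat
  assumes p: "prime p" and kj: "1 \<le> k" "k \<le> j" "j < p"
  shows "\<not> int p dvd ibinom (- int k) (p^2 - j)"
proof
  assume a: "int p dvd ibinom (- int k) (p^2 - j)"
  define L where "L = p^2 - j"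
  define M where "M = k + L - 1"
  have "j < p^2" using jp2[OF p kj(3)] .
  have "real_of_int (ibinom (- int k) L) = real_of_int ((-1)^L * ibinom (int M) L)"
    using gbinomial_minus[of "real k" L] kj unfolding M_def by (simp add: ibinom_real of_nat_diff)
  then have e1: "ibinom (- int k) L = (-1)^L * ibinom (int M) L" by linarith
  have "M choose L = M choose (k - 1)"
    using kj binomial_symmetric[of L M] unfolding M_def by simp
  then have e2: "ibinom (int M) L = ibinom (int M) (k - 1)"
    by (simp only: ibinom_nat)
  have "int p dvd (-1)^L * ibinom (int M) L" using a e1 unfolding L_def by simp
  then have "int p dvd ibinom (int M) L"
  proof (cases "even L")
    case True
    then show ?thesis using \<open>int p dvd (-1)^L * ibinom (int M) L\<close> by simp
  next
    case False
    then have "(-1::int)^L = -1" by simp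
    then show ?thesis using \<open>int p dvd (-1)^L * ibinom (int M) L\<close> by simp
  qed
  then have "int p dvd ibinom (int M) (k-1)" using e2 by simp
  then have "int p dvd (\<Prod>i<k-1. int M - int i)" unfolding ibinom_fact[of "int M" "k-1", symmetric]
    by (rule dvd_mult2)
  moreover have "prime (int p)" using p by simp
  ultimately obtain i where i: "i \<in> {..<k - 1}" "int p dvd int M - int i"
    using prime_dvd_prod_iff[of "{..<k-1}" "int p" "\<lambda>i. int M - int i"] by blast
  have "j < p * p" using \<open>j < p^2\<close> by (simp add: power2_eq_square)
  then have "M + (j - k + 1 + i) = p * p + i" using i kj unfolding M_def L_def power2_eq_square by simp
  then have "int M + int (j - k + 1 + i) = int p * int p + int i" by (metis of_nat_add of_nat_mult)
  then have eqM: "int M - int i = int p * int p - int (j - k + 1 + i)" by linarith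
  have h1: "int p dvd int p * int p - int (j - k + 1 + i)" using i(2) unfolding eqM .
  have "int p dvd int p * int p - (int p * int p - int (j - k + 1 + i))"
    using dvd_diff[OF dvd_triv_left h1] .
  then have "int p dvd int (j - k + 1 + i)" by simp
  then have pd: "p dvd (j - k + 1 + i)" unfolding of_nat_dvd_iff .
  moreover have "0 < j - k + 1 + i" "j - k + 1 + i < p" using i kj by simp_all
  ultimately show False using nat_dvd_not_less[of "j - k + 1 + i" p] by simp
qed

lemma nt1:
  fixes p :: nat and s :: int
  assumes p: "prime p" and j: "1 \<le> j" "j < p"
    and d: "int p dvd ibinom s (p^2 - j)"
  shows "\<forall>k\<in>{1..j}. \<not> int p^2 dvd s + int k"
proof (intro ballI notI)
  fix k assume k: "k \<in> {1..j}" and dk: "int p^2 dvd s + int k"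
  then obtain E where E: "s + int k = int p^2 * E" by blast
  define a where "a = int p^2 * E"
  define L where "L = p^2 - j"
  have s: "s = a + (- int k)" using E a_def by simp
  have "real_of_int (ibinom s L) = (\<Sum>i=0..L. real_of_int (ibinom a i * ibinom (- int k) (L - i)))"
    using gbinomial_Vandermonde[of "real_of_int a" "real_of_int (- int k)" L] s
    by (simp add: ibinom_real)
  then have V: "ibinom s L = (\<Sum>i=0..L. ibinom a i * ibinom (- int k) (L - i))"
    unfolding of_int_sum[symmetric] of_int_eq_iff .
  have V2: "ibinom s L = ibinom (- int k) L + (\<Sum>i=Suc 0..L. ibinom a i * ibinom (- int k) (L - i))"
    unfolding V by (simp add: sum.atLeast_Suc_atMost)
  have "j < p^2" using jp2[OF p j(2)] .
  have "int p dvd (\<Sum>i=Suc 0..L. ibinom a i * ibinom (- int k) (L - i))"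
  proof (rule dvd_sum)
    fix i assume "i \<in> {Suc 0..L}"
    then have "1 \<le> i" "i < p^2" using j unfolding L_def by auto
    then show "int p dvd ibinom a i * ibinom (- int k) (L - i)"
      using nt_P1[OF p] unfolding a_def by simp
  qed
  moreover have "int p dvd ibinom s L" using d unfolding L_def .
  ultimately have "int p dvd ibinom (- int k) L" using V2
    by (simp add: dvd_add_left_iff)
  then show False using nt_P2[OF p, of k j] k j unfolding L_def by auto
qed




definition W :: "complex \<Rightarrow> int \<Rightarrow> complex fps" where
  "W z a = Abs_fps (\<lambda>n. (-1)^n * of_int (ibinom a n) * z powi (a - int n))"

lemma W_rec:
  assumes z: "z \<noteq> 0"
  shows "(fps_const z - fps_X) * W z a = W z (a + 1)"
proof (rule fps_ext)
  fix n
  show "((fps_const z - fps_X) * W z a) $ n = W z (a + 1) $ n"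
  proof (cases n)
    case 0
    have "z powi (a+1) = z * z powi a" using power_int_add_1'[of z a] z by simp
    then show ?thesis using 0 by (simp add: W_def)
  next
    case (Suc k)
    have pz: "z * z powi (a - int (Suc k)) = z powi (a - int k)"
    proof -
      have "z powi (a - int k) = z powi ((a - int (Suc k)) + 1)" by simp
      also have "\<dots> = z powi (a - int (Suc k)) * z" using z power_int_add_1[of z "a - int (Suc k)"] by simp
      finally show ?thesis by simp
    qed
    have "((fps_const z - fps_X) * W z a) $ n
        = z * ((-1)^(Suc k) * of_int (ibinom a (Suc k)) * z powi (a - int (Suc k)))
          - (-1)^k * of_int (ibinom a k) * z powi (a - int k)"
      using Suc by (simp add: W_def algebra_simps)
    also have "\<dots> = (-1)^(Suc k) * (of_int (ibinom a (Suc k)) + of_int (ibinom a k)) * z powi (a - int k)"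
      using pz by (simp add: algebra_simps)
    also have "\<dots> = (-1)^(Suc k) * of_int (ibinom (a+1) (Suc k)) * z powi (a + 1 - int (Suc k))"
      by (simp add: ibinom_pascal)
    also have "\<dots> = W z (a + 1) $ n" using Suc by (simp add: W_def)
    finally show ?thesis .
  qed
qed

lemma W_0: "W z 0 = 1"
proof (rule fps_ext)
  fix n show "W z 0 $ n = 1 $ n"
    using ibinom_nat[of 0 n] by (cases n) (auto simp: W_def)
qed

lemma U_nz: "z \<noteq> 0 \<Longrightarrow> (fps_const z - fps_X :: complex fps) \<noteq> 0"
proof
  assume "z \<noteq> 0" "fps_const z - fps_X = (0 :: complex fps)"
  then have "(fps_const z - fps_X :: complex fps) $ 0 = 0" by simp
  then show False using \<open>z \<noteq> 0\<close> by simp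
qed

lemma W_add:
  assumes z: "z \<noteq> 0"
  shows "W z a * W z b = W z (a + b)"
proof (induction b rule: int_induct[where k=0])
  case base then show ?case by (simp add: W_0)
next
  case (step1 i)
  have "W z a * W z (i + 1) = (fps_const z - fps_X) * (W z a * W z i)"
    using W_rec[OF z, of i] by (metis mult.left_commute)
  also have "\<dots> = W z (a + i + 1)" using step1 W_rec[OF z] by simp
  finally show ?case by (simp add: add.assoc)
next
  case (step2 i)
  have "(fps_const z - fps_X) * (W z a * W z (i - 1)) = W z a * W z i"
    using W_rec[OF z, of "i - 1"] by (metis diff_add_cancel mult.left_commute)
  also have "\<dots> = (fps_const z - fps_X) * W z (a + (i - 1))"
    using step2 W_rec[OF z, of "a + (i - 1)"] by simp
  finally show ?case using U_nz[OF z] by simp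
qed

lemma W_nat: "z \<noteq> 0 \<Longrightarrow> (fps_const z - fps_X) ^ n = W z (int n)"
proof (induction n)
  case 0 then show ?case by (simp add: W_0)
next
  case (Suc n) then show ?case using W_rec[of z "int n"] by (simp add: add.commute)
qed

lemma wpow_W:
  assumes z: "z \<noteq> 0"
  shows "wpow z a = W z a"
proof (cases "a \<ge> 0")
  case True
  then show ?thesis unfolding wpow_def using W_nat[OF z, of "nat a"] by simp
next
  case False
  define n where "n = nat (- a)"
  have a: "a = - int n" using False n_def by simp
  let ?U = "fps_const z - fps_X :: complex fps"
  have "inverse ?U ^ n * ?U ^ n = 1"
    using inverse_mult_eq_1[of ?U] z by (simp flip: power_mult_distrib)
  moreover have "W z a * ?U ^ n = 1"
    using W_nat[OF z, of n] W_add[OF z, of a "int n"] a by (simp add: W_0)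
  ultimately have "inverse ?U ^ n * ?U ^ n = W z a * ?U ^ n" by simp
  then have "inverse ?U ^ n = W z a" using U_nz[OF z] by simp
  then show ?thesis unfolding wpow_def using False n_def by simp
qed

lemma wpow_add: "z \<noteq> 0 \<Longrightarrow> wpow z a * wpow z b = wpow z (a + b)"
  by (simp add: wpow_W W_add)

lemma wpow_0 [simp]: "wpow z 0 = 1"
  by (simp add: wpow_def)

lemma wpow_nth: "z \<noteq> 0 \<Longrightarrow> wpow z a $ n = (-1)^n * of_int (ibinom a n) * z powi (a - int n)"
  by (simp add: wpow_W W_def)

lemma wpow_power: "z \<noteq> 0 \<Longrightarrow> wpow z a ^ k = wpow z (a * int k)"
proof (induction k)
  case 0 then show ?case by simp
next
  case (Suc k) then show ?case using wpow_add[of z a "a * int k"] by (simp add: algebra_simps)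
qed




lemma Zzeta_0: "0 \<in> Zzeta N z"
  unfolding Zzeta_def by (rule CollectI, rule exI[of _ "\<lambda>_. 0"]) simp

lemma Zzeta_add: "x \<in> Zzeta N z \<Longrightarrow> y \<in> Zzeta N z \<Longrightarrow> x + y \<in> Zzeta N z"
proof -
  assume "x \<in> Zzeta N z" "y \<in> Zzeta N z"
  then obtain c d where "x = (\<Sum>k<N. of_int (c k) * z ^ k)" "y = (\<Sum>k<N. of_int (d k) * z ^ k)"
    unfolding Zzeta_def by blast
  then have "x + y = (\<Sum>k<N. of_int (c k + d k) * z ^ k)"
    by (simp add: sum.distrib algebra_simps)
  then show ?thesis unfolding Zzeta_def mem_Collect_eq by (rule exI[of _ "\<lambda>k. c k + d k"])
qed

lemma Zzeta_smult: "x \<in> Zzeta N z \<Longrightarrow> of_int a * x \<in> Zzeta N z"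
proof -
  assume "x \<in> Zzeta N z"
  then obtain c where "x = (\<Sum>k<N. of_int (c k) * z ^ k)"
    unfolding Zzeta_def by blast
  then have "of_int a * x = (\<Sum>k<N. of_int (a * c k) * z ^ k)"
    by (simp add: sum_distrib_left algebra_simps)
  then show ?thesis unfolding Zzeta_def mem_Collect_eq by (rule exI[of _ "\<lambda>k. a * c k"])
qed

lemma Zzeta_pow: "k < N \<Longrightarrow> z ^ k \<in> Zzeta N z"
proof -
  assume k: "k < N"
  have "(\<Sum>i<N. of_int (if i = k then 1 else 0) * z ^ i) = (\<Sum>i<N. if i = k then z ^ i else 0)"
    by (rule sum.cong) auto
  also have "\<dots> = z ^ k" using k by (simp add: sum.delta)
  finally have "z ^ k = (\<Sum>i<N. of_int (if i = k then 1 else 0) * z ^ i)" by simp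
  then show ?thesis unfolding Zzeta_def mem_Collect_eq by (rule exI[of _ "\<lambda>i. if i = k then 1 else 0"])
qed

lemma Zzeta_powi:
  assumes N: "N \<ge> 1" and zN: "z ^ N = 1"
  shows "z powi e \<in> Zzeta N z"
proof -
  have z: "z \<noteq> 0" using zN N by (metis one_neq_zero power_0_left not_one_le_zero)
  have "e = int N * (e div int N) + e mod int N" by simp
  then have "z powi e = z powi (int N * (e div int N)) * z powi (e mod int N)"
    using z by (metis power_int_add)
  also have "z powi (int N * (e div int N)) = 1"
    by (simp add: power_int_mult zN)
  also have "e mod int N = int (nat (e mod int N))" using N by simp
  finally have "z powi e = z ^ nat (e mod int N)" by (metis mult_1 power_int_of_nat)
  moreover have "nat (e mod int N) < N" using N by (simp add: nat_less_iff)
  ultimately show ?thesis using Zzeta_pow by metis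
qed

lemma cong0_0: "cong0 N z 0 p mu"
  unfolding cong0_def using Zzeta_0 by force

lemma cong0_add: "cong0 N z x p mu \<Longrightarrow> cong0 N z y p mu \<Longrightarrow> cong0 N z (x + y) p mu"
  unfolding cong0_def by (metis Zzeta_add distrib_left)

lemma cong0_smult: "cong0 N z x p mu \<Longrightarrow> cong0 N z (of_int a * x) p mu"
  unfolding cong0_def by (metis Zzeta_smult mult.left_commute)

inductive good :: "complex \<Rightarrow> int \<Rightarrow> complex fps \<Rightarrow> bool" for z R where
  gw: "good z R (wpow z (R * e))"
| gadd: "good z R f \<Longrightarrow> good z R g \<Longrightarrow> good z R (f + g)"
| gsm: "good z R f \<Longrightarrow> good z R (fps_const (of_int c) * f)"

lemma good_cong:
  assumes good: "good z R f" and N: "N \<ge> 1" and zN: "z ^ N = 1"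
    and H: "\<forall>e. int p ^ mu dvd ibinom (s + R * e) n"
  shows "cong0 N z ((wpow z s * f) $ n) p mu"
  using good
proof induction
  case (gw e)
  have z: "z \<noteq> 0" using zN N by (metis one_neq_zero power_0_left not_one_le_zero)
  obtain d where d: "ibinom (s + R * e) n = int p ^ mu * d" using H by blast
  have "(wpow z s * wpow z (R * e)) $ n = (-1)^n * of_int (ibinom (s + R * e) n) * z powi (s + R * e - int n)"
    using wpow_add[OF z] wpow_nth[OF z] by simp
  also have "\<dots> = of_nat (p ^ mu) * (of_int ((-1)^n * d) * z powi (s + R * e - int n))"
    using d by simp
  finally show ?case unfolding cong0_def
    using Zzeta_smult[OF Zzeta_powi[OF N zN]] by blast
next
  case (gadd f g)
  then show ?case by (simp add: distrib_left cong0_add)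
next
  case (gsm f c)
  have eq: "wpow z s * (fps_const (of_int c) * f) = fps_const (of_int c) * (wpow z s * f)"
    by (simp add: ac_simps)
  have "(wpow z s * (fps_const (of_int c) * f)) $ n = of_int c * (wpow z s * f) $ n"
    unfolding eq by (rule fps_mult_left_const_nth)
  then show ?case using gsm cong0_smult by simp
qed

lemma good_mult_w:
  assumes z: "z \<noteq> 0" and g: "good z R g"
  shows "good z R (wpow z (R * e) * g)"
  using g
proof induction
  case (gw e')
  then show ?case using wpow_add[OF z] good.gw by (metis distrib_left)
next
  case (gadd f g) then show ?case by (simp add: distrib_left good.gadd)
next
  case (gsm f c) then show ?case by (metis good.gsm mult.left_commute)
qed

lemma good_mult:
  assumes z: "z \<noteq> 0" and f: "good z R f" and g: "good z R g"
  shows "good z R (f * g)"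
  using f
proof induction
  case (gw e) then show ?case using good_mult_w[OF z g] by simp
next
  case (gadd f1 f2) then show ?case by (simp add: distrib_right good.gadd)
next
  case (gsm f c) then show ?case by (metis good.gsm mult.assoc)
qed

lemma good_1: "good z R 1"
  using good.gw[of z R 0] by simp

lemma good_const: "good z R (fps_const (of_int c))"
  using good.gsm[OF good_1, of z R c] by simp

lemma good_0: "good z R 0"
  using good_const[of z R 0] by simp

lemma good_sum: "finite A \<Longrightarrow> (\<And>x. x \<in> A \<Longrightarrow> good z R (f x)) \<Longrightarrow> good z R (\<Sum>x\<in>A. f x)"
  by (induction A rule: finite_induct) (auto intro: good_0 good.gadd)

lemma good_prod:
  assumes z: "z \<noteq> 0"
  shows "finite A \<Longrightarrow> (\<And>x. x \<in> A \<Longrightarrow> good z R (f x)) \<Longrightarrow> good z R (\<Prod>x\<in>A. f x)"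
  by (induction A rule: finite_induct) (auto intro: good_1 good_mult[OF z])




definition intpoly :: "rat poly \<Rightarrow> bool" where
  "intpoly Q \<longleftrightarrow> (\<forall>i. coeff Q i \<in> \<int>)"

lemma intpoly_0: "intpoly 0" by (simp add: intpoly_def)
lemma intpoly_1: "intpoly 1" by (simp add: intpoly_def coeff_1)
lemma intpoly_monom: "intpoly (monom 1 k)" by (simp add: intpoly_def coeff_monom)
lemma intpoly_add: "intpoly P \<Longrightarrow> intpoly Q \<Longrightarrow> intpoly (P + Q)"
  by (simp add: intpoly_def)
lemma intpoly_diff: "intpoly P \<Longrightarrow> intpoly Q \<Longrightarrow> intpoly (P - Q)"
  by (simp add: intpoly_def)
lemma intpoly_mult: "intpoly P \<Longrightarrow> intpoly Q \<Longrightarrow> intpoly (P * Q)"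
  unfolding intpoly_def coeff_mult by (auto intro!: Ints_sum Ints_mult)
lemma intpoly_prod: "finite A \<Longrightarrow> (\<And>x. x \<in> A \<Longrightarrow> intpoly (f x)) \<Longrightarrow> intpoly (\<Prod>x\<in>A. f x)"
  by (induction A rule: finite_induct) (auto intro: intpoly_1 intpoly_mult)

lemma qpoch_0 [simp]: "qpoch 0 = 1" by (simp add: qpoch_def)
lemma qpoch_Suc: "qpoch (Suc n) = qpoch n * (1 - monom 1 (Suc n))"
  by (simp add: qpoch_def)

lemma intpoly_qpoch: "intpoly (qpoch n)"
  unfolding qpoch_def by (auto intro!: intpoly_prod intpoly_diff intpoly_1 intpoly_monom)

lemma qpoch_nz: "qpoch n \<noteq> 0"
proof (induction n)
  case 0 then show ?case by simp
next
  case (Suc n)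
  have "coeff (1 - monom (1::rat) (Suc n)) 0 = 1" by (simp add: coeff_monom)
  then have "1 - monom (1::rat) (Suc n) \<noteq> 0" by (metis coeff_0 zero_neq_one)
  then show ?case using Suc by (simp add: qpoch_Suc)
qed

fun G :: "nat \<Rightarrow> nat \<Rightarrow> rat poly" where
  "G n 0 = 1"
| "G 0 (Suc k) = 0"
| "G (Suc n) (Suc k) = G n k + monom 1 (Suc k) * G n (Suc k)"

lemma intpoly_G: "intpoly (G n k)"
  by (induction n k rule: G.induct) (auto intro: intpoly_1 intpoly_0 intpoly_add intpoly_mult intpoly_monom)

lemma G_zero: "n < k \<Longrightarrow> G n k = 0"
proof (induction n arbitrary: k)
  case 0 then show ?case by (cases k) auto
next
  case (Suc n) then show ?case by (cases k) auto
qed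

lemma G_prod: "k \<le> n \<Longrightarrow> G n k * qpoch (n - k) * qpoch k = qpoch n"
proof (induction n arbitrary: k)
  case 0 then show ?case by simp
next
  case (Suc n)
  show ?case
  proof (cases k)
    case 0 then show ?thesis by simp
  next
    case (Suc k')
    then have k': "k' \<le> n" using Suc.prems by simp
    have A: "G n k' * qpoch (n - k') * qpoch (Suc k') = qpoch n * (1 - monom 1 (Suc k'))"
      using Suc.IH[OF k'] by (simp add: qpoch_Suc ac_simps)
    have B: "monom 1 (Suc k') * G n (Suc k') * qpoch (n - k') * qpoch (Suc k')
           = qpoch n * (monom 1 (Suc k') - monom 1 (Suc n))"
    proof (cases "k' = n")
      case True then show ?thesis by (simp add: G_zero)
    next
      case False
      then have kn: "Suc k' \<le> n" using k' by simp
      have nk: "n - k' = Suc (n - Suc k')" using kn by simp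
      have "monom 1 (Suc k') * G n (Suc k') * qpoch (n - k') * qpoch (Suc k')
          = monom 1 (Suc k') * (1 - monom 1 (n - k')) * (G n (Suc k') * qpoch (n - Suc k') * qpoch (Suc k'))"
        unfolding nk qpoch_Suc by (simp add: ac_simps)
      also have "\<dots> = monom 1 (Suc k') * (1 - monom 1 (n - k')) * qpoch n"
        using Suc.IH[OF kn] by simp
      also have "monom 1 (Suc k') * (1 - monom (1::rat) (n - k')) = monom 1 (Suc k') - monom 1 (Suc n)"
        using kn by (simp add: right_diff_distrib mult_monom)
      finally show ?thesis by (simp add: ac_simps)
    qed
    have "G (Suc n) k * qpoch (Suc n - k) * qpoch k
        = G n k' * qpoch (n - k') * qpoch (Suc k') + monom 1 (Suc k') * G n (Suc k') * qpoch (n - k') * qpoch (Suc k')"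
      using Suc by (simp add: algebra_simps)
    also have "\<dots> = qpoch n * (1 - monom 1 (Suc n))" unfolding A B by (simp add: algebra_simps)
    also have "\<dots> = qpoch (Suc n)" by (simp add: qpoch_Suc)
    finally show ?thesis .
  qed
qed

lemma gauss_binom_G: "gauss_binom n k = G n k"
proof (cases "k \<le> n")
  case True
  have "qpoch n div (qpoch (n - k) * qpoch k) = (G n k * (qpoch (n - k) * qpoch k)) div (qpoch (n - k) * qpoch k)"
    using G_prod[OF True] by (simp add: ac_simps)
  also have "\<dots> = G n k" using qpoch_nz by (simp del: mult_eq_0_iff)
  finally show ?thesis using True by (simp add: gauss_binom_def)
next
  case False then show ?thesis by (simp add: gauss_binom_def G_zero)
qed

lemma intpoly_gauss: "intpoly (gauss_binom n k)"
  by (simp add: gauss_binom_G intpoly_G)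




lemma fps_const_sum': "fps_const (\<Sum>x\<in>A. f x) = (\<Sum>x\<in>A. fps_const (f x))"
  by (induction A rule: infinite_finite_induct) (simp_all del: fps_const_add add: fps_const_add[symmetric])

lemma map_h_mult:
  "map_poly (\<lambda>c. fps_const (of_rat c :: complex)) (P * Q) =
   map_poly (\<lambda>c. fps_const (of_rat c)) P * map_poly (\<lambda>c. fps_const (of_rat c)) Q"
  by (rule poly_eqI) (simp add: coeff_map_poly coeff_mult of_rat_sum of_rat_mult fps_const_sum')

lemma map_h_diff:
  "map_poly (\<lambda>c. fps_const (of_rat c :: complex)) (P - Q) =
   map_poly (\<lambda>c. fps_const (of_rat c)) P - map_poly (\<lambda>c. fps_const (of_rat c)) Q"
  by (rule poly_eqI) (simp add: coeff_map_poly of_rat_diff)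

lemma subst_mult: "subst_poly z R (P * Q) = subst_poly z R P * subst_poly z R Q"
  unfolding subst_poly_def map_h_mult by simp

lemma subst_diff: "subst_poly z R (P - Q) = subst_poly z R P - subst_poly z R Q"
  unfolding subst_poly_def map_h_diff by simp

lemma subst_1: "subst_poly z R 1 = 1"
  unfolding subst_poly_def by simp

lemma subst_0: "subst_poly z R 0 = 0"
  unfolding subst_poly_def by simp

lemma subst_monom: "subst_poly z R (monom 1 k) = wpow z R ^ k"
  unfolding subst_poly_def by (simp add: map_poly_monom poly_monom)

lemma subst_prod: "finite A \<Longrightarrow> subst_poly z R (\<Prod>x\<in>A. f x) = (\<Prod>x\<in>A. subst_poly z R (f x))"
  by (induction A rule: finite_induct) (simp_all add: subst_1 subst_mult)

lemma subst_good:
  assumes z: "z \<noteq> 0"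
  shows "intpoly Q \<Longrightarrow> good z R (subst_poly z R Q)"
proof (induction Q rule: pCons_induct)
  case 0 then show ?case by (simp add: subst_0 good_0)
next
  case (pCons a Q)
  have a: "a \<in> \<int>" using pCons.prems unfolding intpoly_def by (metis coeff_pCons_0)
  have "intpoly Q" using pCons.prems unfolding intpoly_def by (metis coeff_pCons_Suc)
  then have gQ: "good z R (subst_poly z R Q)" by (rule pCons.IH)
  obtain c where c: "a = of_int c" using a by (auto elim: Ints_cases)
  have "subst_poly z R (pCons a Q) = fps_const (of_int c) + wpow z (R * 1) * subst_poly z R Q"
    unfolding subst_poly_def using c by (simp add: map_poly_pCons)
  then show ?case using good.gadd[OF good_const good_mult[OF z good.gw[of z R 1] gQ]] by simp
qed

lemma prod_nth_zero:
  fixes f :: "'b \<Rightarrow> complex fps"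
  shows "finite K \<Longrightarrow> (\<forall>k\<in>K. f k $ 0 = 0) \<Longrightarrow> i < card K \<Longrightarrow> (\<Prod>k\<in>K. f k) $ i = 0"
proof (induction K arbitrary: i rule: finite_induct)
  case empty then show ?case by simp
next
  case (insert x K)
  have "(\<Prod>k\<in>insert x K. f k) $ i = (\<Sum>u=0..i. f x $ u * (\<Prod>k\<in>K. f k) $ (i - u))"
    using insert by (simp add: fps_mult_nth)
  also have "\<dots> = 0"
  proof (rule sum.neutral, rule ballI)
    fix u assume u: "u \<in> {0..i}"
    show "f x $ u * (\<Prod>k\<in>K. f k) $ (i - u) = 0"
    proof (cases u)
      case 0 then show ?thesis using insert by simp
    next
      case (Suc u')
      then have "i - u < card K" using insert u by auto
      then show ?thesis using insert by simp
    qed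
  qed
  finally show ?case .
qed

lemma mult_nth_zero:
  fixes A B :: "complex fps"
  assumes "\<forall>u\<le>n. A $ u = 0" "i \<le> n"
  shows "(A * B) $ i = 0"
  unfolding fps_mult_nth using assms by (intro sum.neutral) auto

lemma qpoch_low:
  assumes N: "N \<ge> 1" and zN: "z ^ N = 1" and a: "a \<ge> N * (n + 1)"
  shows "\<forall>i\<le>n. subst_poly z R (qpoch a) $ i = 0"
proof (intro allI impI)
  fix i assume i: "i \<le> n"
  have z: "z \<noteq> 0" using zN N by (metis one_neq_zero power_0_left not_one_le_zero)
  define f where "f k = 1 - wpow z R ^ k" for k
  have sq: "subst_poly z R (qpoch a) = (\<Prod>k\<in>{1..a}. f k)"
    unfolding qpoch_def f_def by (simp add: subst_prod subst_diff subst_1 subst_monom)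
  define K where "K = (\<lambda>c. N * c) ` {1..n+1}"
  have inj: "inj_on (\<lambda>c. N * c) {1..n+1}" using N by (auto simp: inj_on_def)
  have cK: "card K = n + 1" unfolding K_def using card_image[OF inj] by simp
  have KS: "K \<subseteq> {1..a}"
  proof
    fix k assume "k \<in> K"
    then obtain c where c: "c \<in> {1..n+1}" "k = N * c" unfolding K_def by blast
    have "N * c \<le> N * (n + 1)" using c by (intro mult_le_mono2) simp
    moreover have "1 \<le> N * c" using c N by simp
    ultimately show "k \<in> {1..a}" using a c by simp
  qed
  have fK: "\<forall>k\<in>K. f k $ 0 = 0"
  proof
    fix k assume "k \<in> K"
    then obtain c where kc: "k = N * c" unfolding K_def by blast
    have "wpow z R ^ k $ 0 = z powi (R * int k)" using wpow_power[OF z] wpow_nth[OF z] by simp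
    also have "R * int k = int N * (R * int c)" using kc by simp
    also have "z powi (int N * (R * int c)) = 1" by (simp add: power_int_mult zN)
    finally show "f k $ 0 = 0" unfolding f_def by simp
  qed
  have "(\<Prod>k\<in>{1..a}. f k) = (\<Prod>k\<in>{1..a} - K. f k) * (\<Prod>k\<in>K. f k)"
    using prod.subset_diff[OF KS] by simp
  moreover have "\<forall>u\<le>n. (\<Prod>k\<in>K. f k) $ u = 0"
    using prod_nth_zero[of K f] fK cK KS finite_subset by fastforce
  ultimately show "subst_poly z R (qpoch a) $ i = 0"
    using sq mult_nth_zero[of n _ i] i by (simp add: mult.commute)
qed




lemma Fterm_good:
  assumes z: "z \<noteq> 0"
  shows "good z R (Fterm t z R (a, jj))"
proof -
  have c: "fps_const ((-1) ^ nat (hpp t) :: complex) = fps_const (of_int ((-1) ^ nat (hpp t)))" by simp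
  have s: "good z R (\<Sum>k<mt t. \<Prod>l=1..mt t - 1.
         subst_poly z R (gauss_binom (a + (if l \<le> k then 1 else 0)) (jj l)))"
    by (intro good_sum good_prod[OF z] subst_good[OF z] intpoly_gauss) auto
  show ?thesis unfolding Fterm_def prod.case c
    by (intro good_mult[OF z] good_const good.gw s subst_good[OF z] intpoly_qpoch)
qed

lemma Fterm_zero_tuple:
  assumes l: "l \<in> {1..mt t - 1}" and big: "jj l > a + 1"
  shows "Fterm t z R (a, jj) = 0"
proof -
  have "(\<Sum>k<mt t. \<Prod>l=1..mt t - 1.
         subst_poly z R (gauss_binom (a + (if l \<le> k then 1 else 0)) (jj l))) = 0"
  proof (rule sum.neutral, rule ballI)
    fix k assume "k \<in> {..<mt t}"
    have z0: "subst_poly z R (gauss_binom (a + (if l \<le> k then 1 else 0)) (jj l)) = 0"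
      using big by (simp add: gauss_binom_def subst_0)
    show "(\<Prod>l=1..mt t - 1. subst_poly z R (gauss_binom (a + (if l \<le> k then 1 else 0)) (jj l))) = 0"
    proof (rule prod_zero)
      show "\<exists>l'\<in>{1..mt t - 1}. subst_poly z R (gauss_binom (a + (if l' \<le> k then 1 else 0)) (jj l')) = 0"
        using l z0 by blast
    qed simp
  qed
  then show ?thesis unfolding Fterm_def by simp
qed

lemma F_low:
  assumes N: "N \<ge> 1" and zN: "z ^ N = 1" and t: "t \<ge> 1"
  shows "\<exists>G. good z R G \<and> (\<forall>i\<le>n. F_subst t z R $ i = G $ i)"
proof -
  have z: "z \<noteq> 0" using zN N by (metis one_neq_zero power_0_left not_one_le_zero)
  define B where "B = N * (n + 1)"
  show ?thesis
  proof (cases "t = 1")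
    case True
    define G where "G = (\<Sum>a<B. subst_poly z R (qpoch a))"
    have "good z R G" unfolding G_def
      by (intro good_sum subst_good[OF z] intpoly_qpoch) auto
    moreover have "\<forall>i\<le>n. F_subst t z R $ i = G $ i"
    proof (intro allI impI)
      fix i assume i: "i \<le> n"
      have "infsum (\<lambda>a. subst_poly z R (qpoch a) $ i) UNIV = infsum (\<lambda>a. subst_poly z R (qpoch a) $ i) {..<B}"
      proof (rule infsum_cong_neutral)
        fix a assume "a \<in> UNIV - {..<B}"
        then have "a \<ge> N * (n + 1)" unfolding B_def by simp
        then show "subst_poly z R (qpoch a) $ i = 0" using qpoch_low[OF N zN] i by blast
      qed auto
      then show "F_subst t z R $ i = G $ i"
        unfolding F_subst_def G_def using True by (simp add: fps_sum_nth)
    qed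
    ultimately show ?thesis by blast
  next
    case False
    define S where "S = (UNIV :: nat set) \<times> tuples t"
    define Tup where "Tup = {jj :: nat \<Rightarrow> nat. \<forall>x. (x \<in> {1..mt t - 1} \<longrightarrow> jj x \<in> {0..B+1}) \<and> (x \<notin> {1..mt t - 1} \<longrightarrow> jj x = 0)}"
    have fT: "finite Tup" unfolding Tup_def by (rule finite_set_of_finite_funs) auto
    define T where "T = S \<inter> ({..<B} \<times> Tup)"
    have fin: "finite T" unfolding T_def using fT by auto
    define G where "G = (\<Sum>nj\<in>T. Fterm t z R nj)"
    have "good z R G" unfolding G_def
    proof (intro good_sum fin)
      fix nj show "good z R (Fterm t z R nj)" using Fterm_good[OF z] by (cases nj) simp
    qed
    moreover have "\<forall>i\<le>n. F_subst t z R $ i = G $ i"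
    proof (intro allI impI)
      fix i assume i: "i \<le> n"
      have "infsum (\<lambda>nj. Fterm t z R nj $ i) S = infsum (\<lambda>nj. Fterm t z R nj $ i) T"
      proof (rule infsum_cong_neutral)
        fix nj assume nj: "nj \<in> S - T"
        obtain a jj where aj: "nj = (a, jj)" by (cases nj)
        have jt: "jj \<in> tuples t" using nj aj unfolding S_def by auto
        show "Fterm t z R nj $ i = 0"
        proof (cases "a < B")
          case False
          then have "a \<ge> N * (n + 1)" unfolding B_def by simp
          then have low: "\<forall>u\<le>n. subst_poly z R (qpoch a) $ u = 0" using qpoch_low[OF N zN] by blast
          have "Fterm t z R nj = subst_poly z R (qpoch a) *
             (fps_const ((-1) ^ nat (hpp t)) * wpow z (R * (- hp t)) * wpow z (R * qexp t jj) *
             (\<Sum>k<mt t. \<Prod>l=1..mt t - 1.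
                subst_poly z R (gauss_binom (a + (if l \<le> k then 1 else 0)) (jj l))))"
            unfolding aj Fterm_def by (simp add: ac_simps)
          then show ?thesis using mult_nth_zero[OF low i] by simp
        next
          case True
          then have "jj \<notin> Tup" using nj aj unfolding T_def S_def by auto
          moreover have "\<forall>x. x \<notin> {1..mt t - 1} \<longrightarrow> jj x = 0" using jt unfolding tuples_def by blast
          ultimately obtain l where l: "l \<in> {1..mt t - 1}" "jj l \<notin> {0..B+1}" unfolding Tup_def by blast
          then have "jj l > a + 1" using True by auto
          then show ?thesis using Fterm_zero_tuple[OF l(1)] aj by simp
        qed
      qed (auto simp: T_def)
      then show "F_subst t z R $ i = G $ i"
        unfolding F_subst_def G_def using False fin by (simp add: fps_sum_nth S_def)
    qed
    ultimately show ?thesis by blast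
  qed
qed

theorem lemma4p11:
  fixes p :: nat and r s :: int and j t N m lam :: nat and z :: complex
  assumes "prime p"
    and "j \<in> {1..p - 1}"
    and "t \<ge> 1" and "N \<ge> 1"
    and "z ^ N = 1"
    and "int p dvd ibinom s (p ^ 2 - j)"
    and "m \<ge> 1" and "lam \<ge> 1"
  shows "cong0 N z (xi (int (p ^ 2) * r) s z t (p ^ lam * m - j)) p (lam - 1)"
proof -
  define n where "n = p ^ lam * m - j"
  define R where "R = int (p ^ 2) * r"
  have p: "prime p" and j1: "1 \<le> j" and jp: "j < p" using assms(1,2) prime_gt_1_nat[OF assms(1)] by auto
  have nd: "\<forall>k\<in>{1..j}. \<not> int p^2 dvd s + int k" using nt1[OF p j1 jp assms(6)] .
  have H: "\<forall>e. int p ^ (lam - 1) dvd ibinom (s + R * e) n"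
  proof
    fix e
    have "\<forall>k\<in>{1..j}. \<not> int p^2 dvd (s + R * e) + int k"
    proof
      fix k assume k: "k \<in> {1..j}"
      have "(s + R * e) + int k = (s + int k) + int p^2 * (r * e)" unfolding R_def by simp
      then show "\<not> int p^2 dvd (s + R * e) + int k" using nd k
        by (metis dvd_add_left_iff dvd_triv_left)
    qed
    then show "int p ^ (lam - 1) dvd ibinom (s + R * e) n"
      unfolding n_def using nt2[OF p j1 jp _ assms(7,8)] by blast
  qed
  obtain G where G: "good z R G" "\<forall>i\<le>n. F_subst t z R $ i = G $ i"
    using F_low[OF assms(4,5,3)] by blast
  have "xi R s z t n = (wpow z s * G) $ n"
    unfolding xi_def fps_mult_nth using G(2) by (intro sum.cong) auto
  then show ?thesis
    using good_cong[OF G(1) assms(4,5) H] unfolding n_def R_def by simp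
qed



end
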